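(* Let $\mathcal{C}$ be an $[n,k]$ MDS code over $\mathbb{F}_q$ with generator matrix $\mathbf{G}\in\mathbb{F}_q^{k\times n}$, let $\mathbf{X}$ be uniformly distributed over $\mathbb{F}_q^{\alpha m\times k}$ and $\mathbf{Y}=\mathbf{X}\mathbf{G}\in\mathbb{F}_q^{\alpha m\times n}$. Let $\mathbf{q}\in\mathbb{F}_q^{\alpha m\times\beta n}$ be such that for every $\mathcal{T}\subseteq[n]$ with $|\mathcal{T}|=t$ and every nonempty $\mathcal{F}\subseteq[m]$, $$\mathrm{rank}(\mathbf{q}[\psi_\alpha(\mathcal{F}),\psi_\beta(\mathcal{T})])=|\mathrm{colsupp}(\mathbf{q}[\psi_\alpha(\mathcal{F}),\psi_\beta(\mathcal{T})])|.$$ Then for every nonempty $\mathcal{F}\subseteq[m]$ and every $\mathcal{N}\subseteq[n]$ with $|\mathcal{N}|=k+t-1$, $$H\Big(\sum_{l\in\psi_\alpha(\mathcal{F})}(\mathbf{Y}[l,\mathcal{N}]\otimes\mathbf{1}_\beta)\star\mathbf{q}[l,\psi_\beta(\mathcal{N})]\Big)=|\mathrm{colsupp}(\mathbf{q}[\psi_\alpha(\mathcal{F}),\psi_\beta(\mathcal{N})])|,$$ with entropy measured in $q$-ary units.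
   Context: $\psi_\beta(\mathcal{I})=\bigcup_{i\in\mathcal{I}}\{(i-1)\beta+1,\dots,i\beta\}$; $\mathbf{W}[\mathcal{I},\mathcal{J}]$ is the submatrix with rows $\mathcal{I}$ and columns $\mathcal{J}$ ($l$ alone denotes the single row $l$); $\mathrm{colsupp}(\mathbf{W})$ is the set of indices of nonzero columns. $\mathbf{1}_\beta$ is the all-one row vector of length $\beta$, $\otimes$ the Kronecker product (so $\mathbf{Y}[l,\mathcal{N}]\otimes\mathbf{1}_\beta$ repeats each entry $\beta$ times), and $\star$ the entrywise (Hadamard) product. *)

theory Defs
  imports "Jordan_Normal_Form.DL_Rank_Submatrix"
begin

(* Conventions: all indices are 0-based; [n] is {0..<n}. *)

definition psi :: "nat \<Rightarrow> nat set \<Rightarrow> nat set" where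
  "psi \<beta> I = (\<Union>i\<in>I. {i * \<beta> ..< (i + 1) * \<beta>})"

definition mat_rank :: "'a::field mat \<Rightarrow> nat" where
  "mat_rank W = vec_space.rank (dim_row W) W"

definition colsupp :: "'a::zero mat \<Rightarrow> nat set" where
  "colsupp W = {j. j < dim_col W \<and> col W j \<noteq> 0\<^sub>v (dim_row W)}"

definition hweight :: "'a::zero vec \<Rightarrow> nat" where
  "hweight c = card {i. i < dim_vec c \<and> c $ i \<noteq> 0}"

definition code_of :: "'a::field mat \<Rightarrow> 'a vec set" where
  "code_of G = {transpose_mat G *\<^sub>v u | u. u \<in> carrier_vec (dim_row G)}"

definition min_distance :: "'a::field mat \<Rightarrow> nat" where
  "min_distance G = Min {hweight c | c. c \<in> code_of G \<and> c \<noteq> 0\<^sub>v (dim_col G)}"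

definition mds_generator :: "'a::field mat \<Rightarrow> nat \<Rightarrow> nat \<Rightarrow> bool" where
  "mds_generator G n k \<longleftrightarrow> G \<in> carrier_mat k n \<and> mat_rank G = k
      \<and> min_distance G = n - k + 1"

definition kron_ones :: "'a vec \<Rightarrow> nat \<Rightarrow> 'a vec" where
  "kron_ones v \<beta> = vec (dim_vec v * \<beta>) (\<lambda>c. v $ (c div \<beta>))"

definition hadamard :: "'a::times vec \<Rightarrow> 'a vec \<Rightarrow> 'a vec" where
  "hadamard v w = vec (dim_vec v) (\<lambda>i. v $ i * w $ i)"

definition row_sub :: "'a mat \<Rightarrow> nat \<Rightarrow> nat set \<Rightarrow> 'a vec" where
  "row_sub W l J = row (submatrix W {l} J) 0"

definition prob_unif :: "'x set \<Rightarrow> ('x \<Rightarrow> 'z) \<Rightarrow> 'z \<Rightarrow> real" where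
  "prob_unif A f z = real (card {x\<in>A. f x = z}) / real (card A)"

definition entropy_unif :: "real \<Rightarrow> 'x set \<Rightarrow> ('x \<Rightarrow> 'z) \<Rightarrow> real" where
  "entropy_unif b A f = - (\<Sum>z\<in>f ` A. prob_unif A f z * log b (prob_unif A f z))"

definition answer ::
  "'a::field mat \<Rightarrow> 'a mat \<Rightarrow> 'a mat \<Rightarrow> nat \<Rightarrow> nat \<Rightarrow> nat set \<Rightarrow> nat set \<Rightarrow> 'a vec" where
  "answer G Q X \<alpha> \<beta> F N =
     (let Y = X * G in
      vec (\<beta> * card N)
        (\<lambda>c. \<Sum>l\<in>psi \<alpha> F. (hadamard (kron_ones (row_sub Y l N) \<beta>) (row_sub Q l (psi \<beta> N))) $ c))"

end

theory Submission
  imports Defs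
begin

lemma solve_lin:
  fixes r :: "'i \<Rightarrow> 'd \<Rightarrow> 'a::field"
  assumes "finite I" "finite D"
    and "\<And>lam. (\<forall>d\<in>D. (\<Sum>i\<in>I. lam i * r i d) = 0) \<Longrightarrow> \<forall>i\<in>I. lam i = 0"
  shows "\<exists>x. \<forall>i\<in>I. (\<Sum>d\<in>D. r i d * x d) = v i"
  using assms(1,3)
proof (induction I arbitrary: r v rule: finite_induct)
  case empty
  then show ?case by simp
next
  case (insert s I)
  have "\<exists>p\<in>D. r s p \<noteq> 0"
  proof (rule ccontr)
    assume "\<not> ?thesis"
    then have "\<forall>d\<in>D. (\<Sum>i\<in>insert s I. (\<lambda>i. if i = s then 1 else 0) i * r i d) = 0"
      using insert.hyps by (simp add: sum.insert_if)
    from insert.prems[OF this] show False by simp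
  qed
  then obtain p where p: "p \<in> D" "r s p \<noteq> 0" by blast
  define r' where "r' i d = r i d - (r i p / r s p) * r s d" for i d
  define v' where "v' i = v i - (r i p / r s p) * v s" for i
  have indep': "\<forall>i\<in>I. lam i = 0" if h: "\<forall>d\<in>D. (\<Sum>i\<in>I. lam i * r' i d) = 0" for lam
  proof -
    define lm where "lm i = (if i = s then - (\<Sum>j\<in>I. lam j * r j p) / r s p else lam i)" for i
    have "\<forall>d\<in>D. (\<Sum>i\<in>insert s I. lm i * r i d) = 0"
    proof
      fix d assume d: "d \<in> D"
      have "(\<Sum>i\<in>insert s I. lm i * r i d) = lm s * r s d + (\<Sum>i\<in>I. lam i * r i d)"
        using insert.hyps by (simp add: lm_def) (auto intro!: sum.cong)
      also have "\<dots> = (\<Sum>i\<in>I. lam i * r' i d)"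
        by (simp add: lm_def r'_def algebra_simps sum_subtractf sum_distrib_left sum_distrib_right sum_divide_distrib)
      finally show "(\<Sum>i\<in>insert s I. lm i * r i d) = 0" using h d by simp
    qed
    from insert.prems[OF this] have "\<forall>i\<in>insert s I. lm i = 0" .
    then show ?thesis
    proof (intro ballI)
      fix i assume "\<forall>i\<in>insert s I. lm i = 0" "i \<in> I"
      moreover then have "i \<noteq> s" using insert.hyps by blast
      ultimately show "lam i = 0" unfolding lm_def by force
    qed
  qed
  from insert.IH[OF indep'] obtain x' where x': "\<forall>i\<in>I. (\<Sum>d\<in>D. r' i d * x' d) = v' i" by blast
  define \<mu> where "\<mu> = (v s - (\<Sum>d\<in>D. r s d * x' d)) / r s p"
  define x where "x d = x' d + (if d = p then \<mu> else 0)" for d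
  have sx: "(\<Sum>d\<in>D. r i d * x d) = (\<Sum>d\<in>D. r i d * x' d) + r i p * \<mu>" for i
  proof -
    have "(\<Sum>d\<in>D. r i d * x d) = (\<Sum>d\<in>D. r i d * x' d) + (\<Sum>d\<in>D. r i d * (if d = p then \<mu> else 0))"
      by (simp add: x_def algebra_simps sum.distrib)
    also have "(\<Sum>d\<in>D. r i d * (if d = p then \<mu> else 0)) = r i p * \<mu>"
      using p(1) assms(2) by (simp add: if_distrib sum.delta cong: if_cong)
    finally show ?thesis .
  qed
  have "\<forall>i\<in>insert s I. (\<Sum>d\<in>D. r i d * x d) = v i"
  proof
    fix i assume i: "i \<in> insert s I"
    show "(\<Sum>d\<in>D. r i d * x d) = v i"
    proof (cases "i = s")
      case True
      then show ?thesis unfolding sx using p(2) by (simp add: \<mu>_def)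
    next
      case False
      then have "i \<in> I" using i by simp
      then have e: "(\<Sum>d\<in>D. r' i d * x' d) = v' i" using x' by blast
      have e0: "(\<Sum>d\<in>D. r' i d * x' d) = (\<Sum>d\<in>D. r i d * x' d) - (r i p / r s p) * (\<Sum>d\<in>D. r s d * x' d)"
        by (simp add: r'_def algebra_simps sum_subtractf sum_distrib_left)
      define cc where "cc = r i p / r s p"
      define Si where "Si = (\<Sum>d\<in>D. r i d * x' d)"
      define Ss where "Ss = (\<Sum>d\<in>D. r s d * x' d)"
      have e1: "Si - cc * Ss = v i - cc * v s"
        using e e0 unfolding v'_def cc_def Si_def Ss_def by simp
      have e2: "r i p * \<mu> = cc * (v s - Ss)" unfolding \<mu>_def cc_def Ss_def by simp
      have "Si + r i p * \<mu> = v i" unfolding e2 using e1 by (simp add: algebra_simps)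
      then show ?thesis unfolding sx Si_def .
    qed
  qed
  then show ?case by blast
qed

lemma rank_full_rows_indep:
  fixes G :: "'a::field mat"
  assumes G: "G \<in> carrier_mat k n" and rk: "vec_space.rank k G = k"
    and u: "u \<in> carrier_vec k"
    and h: "\<And>j. j < n \<Longrightarrow> (\<Sum>i<k. u $ i * G $$ (i, j)) = 0"
  shows "u = 0\<^sub>v k"
proof -
  interpret vec_space "TYPE('a)" k .
  obtain S where S: "maximal S (\<lambda>T. T \<subseteq> set (cols G) \<and> lin_indpt T)"
    using maximal_exists[of "(\<lambda>T. T \<subseteq> set (cols G) \<and> lin_indpt T)" "card (set (cols G))" "{}"]
    by (meson List.finite_set card_mono empty_iff empty_subsetI finite_lin_indpt2 rev_finite_subset)
  have cS: "card S = k" using rank_card_indpt[OF G S] rk by simp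
  have Ssub: "S \<subseteq> set (cols G)" and Sli: "lin_indpt S" using S unfolding maximal_def by auto
  have colsC: "set (cols G) \<subseteq> carrier_vec k" using G cols_dim by blast
  have SC: "S \<subseteq> carrier_vec k" using Ssub colsC by blast
  have fS: "finite S" using Ssub finite_subset by blast
  have "basis S" by (rule dim_li_is_basis) (use fS SC Sli cS dim_is_n in auto)
  then have spanS: "span S = carrier_vec k" unfolding basis_def by simp
  have orth: "(\<Sum>r<k. u $ r * s $ r) = 0" if "s \<in> S" for s
  proof -
    from that Ssub obtain j where j: "j < n" "s = col G j"
      using G by (auto simp: cols_def)
    have "(\<Sum>r<k. u $ r * s $ r) = (\<Sum>r<k. u $ r * G $$ (r, j))"
      using j G by (intro sum.cong) auto
    then show ?thesis using h[OF j(1)] by simp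
  qed
  show ?thesis
  proof (rule eq_vecI)
    show "dim_vec u = dim_vec (0\<^sub>v k)" using u by simp
    fix i assume "i < dim_vec (0\<^sub>v k)"
    then have i: "i < k" by simp
    have "unit_vec k i \<in> span S" using spanS i by simp
    then obtain a A where aA: "unit_vec k i = lincomb a A" "finite A" "A \<subseteq> S"
      unfolding span_def by blast
    have AC: "A \<subseteq> carrier_vec k" using aA SC by blast
    have "u $ i = (\<Sum>r<k. u $ r * unit_vec k i $ r)"
      using i by (simp add: unit_vec_def if_distrib sum.delta cong: if_cong)
    also have "\<dots> = (\<Sum>r<k. u $ r * (\<Sum>s\<in>A. a s * s $ r))"
      using aA(1) lincomb_index[OF _ AC] by (intro sum.cong) auto
    also have "\<dots> = (\<Sum>s\<in>A. a s * (\<Sum>r<k. u $ r * s $ r))"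
      by (simp add: sum_distrib_left sum_distrib_right mult_ac sum.swap[of _ A])
    also have "\<dots> = 0" using orth aA(3) by (auto intro!: sum.neutral)
    finally show "u $ i = 0\<^sub>v k $ i" using i by simp
  qed
qed

lemma rank_colsupp_indep:
  fixes A :: "'a::field mat"
  assumes A: "A \<in> carrier_mat nr nc" and rk: "vec_space.rank nr A = card (colsupp A)"
    and h: "\<And>r. r < nr \<Longrightarrow> (\<Sum>c\<in>colsupp A. \<mu> c * A $$ (r, c)) = 0"
    and c0: "c0 \<in> colsupp A"
  shows "\<mu> c0 = 0"
proof (rule ccontr)
  assume nz: "\<mu> c0 \<noteq> 0"
  interpret vec_space "TYPE('a)" nr .
  define Z where "Z = colsupp A"
  have Zsub: "Z \<subseteq> {..<nc}" using A unfolding Z_def colsupp_def by auto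
  have fZ: "finite Z" using Zsub finite_subset by blast
  obtain S where S: "maximal S (\<lambda>T. T \<subseteq> set (cols A) \<and> lin_indpt T)"
    using maximal_exists[of "(\<lambda>T. T \<subseteq> set (cols A) \<and> lin_indpt T)" "card (set (cols A))" "{}"]
    by (meson List.finite_set card_mono empty_iff empty_subsetI finite_lin_indpt2 rev_finite_subset)
  have cS: "card S = card Z" using rank_card_indpt[OF A S] rk Z_def by simp
  have Ssub: "S \<subseteq> set (cols A)" and Sli: "lin_indpt S" using S unfolding maximal_def by auto
  have colsC: "set (cols A) \<subseteq> carrier_vec nr" using A cols_dim by blast
  have SC: "S \<subseteq> carrier_vec nr" using Ssub colsC by blast
  have z: "0\<^sub>v nr \<notin> S"
  proof -
    have "UNIV \<noteq> {0::'a}" by (metis UNIV_I singletonD zero_neq_one)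
    then show ?thesis using zero_nin_lin_indpt[OF SC Sli] by (auto simp: class_ring_simps)
  qed
  have SZ: "S \<subseteq> col A ` Z"
  proof
    fix s assume s: "s \<in> S"
    then obtain j where j: "j < nc" "s = col A j" using Ssub A by (auto simp: cols_def)
    have "s \<noteq> 0\<^sub>v nr" using s z by auto
    then have "j \<in> Z" using j A unfolding Z_def colsupp_def by auto
    then show "s \<in> col A ` Z" using j by auto
  qed
  have le1: "card S \<le> card (col A ` Z)" using SZ fZ by (intro card_mono) auto
  have le2: "card (col A ` Z) \<le> card Z" using fZ card_image_le by blast
  have eqs: "card (col A ` Z) = card Z" "card S = card (col A ` Z)" using cS le1 le2 by linarith+
  have SZe: "S = col A ` Z" using card_subset_eq[OF _ SZ eqs(2)] fZ by blast
  have inj: "inj_on (col A) Z" using eq_card_imp_inj_on[OF fZ eqs(1)] .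
  define a where "a v = \<mu> (the_inv_into Z (col A) v)" for v
  have aa: "a (col A c) = \<mu> c" if "c \<in> Z" for c
    using the_inv_into_f_f[OF inj that] a_def by simp
  have lc: "lincomb a (col A ` Z) = 0\<^sub>v nr"
  proof (rule eq_vecI)
    have CZ: "col A ` Z \<subseteq> carrier_vec nr" using A by auto
    show "dim_vec (lincomb a (col A ` Z)) = dim_vec (0\<^sub>v nr)"
      using lincomb_closed[OF CZ] by auto
    fix r assume "r < dim_vec (0\<^sub>v nr)"
    then have r: "r < nr" by simp
    have "lincomb a (col A ` Z) $ r = (\<Sum>x\<in>col A ` Z. a x * x $ r)"
      using lincomb_index[OF r CZ] .
    also have "\<dots> = (\<Sum>c\<in>Z. a (col A c) * col A c $ r)"
      using sum.reindex[OF inj] by simp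
    also have "\<dots> = (\<Sum>c\<in>Z. \<mu> c * A $$ (r, c))"
      using aa Zsub A r by (intro sum.cong) auto
    also have "\<dots> = 0" using h[OF r] Z_def by simp
    finally show "lincomb a (col A ` Z) $ r = 0\<^sub>v nr $ r" using r by simp
  qed
  have "lin_dep (col A ` Z)"
    by (rule lin_dep_crit[where A="col A ` Z" and S="col A ` Z" and a=a and v="col A c0"])
       (use fZ lc aa c0 nz Z_def in \<open>auto simp: class_ring_simps\<close>)
  then show False using Sli SZe by simp
qed

lemma div_eq_from_bounds: "i * b \<le> (a::nat) \<Longrightarrow> a < (i + 1) * b \<Longrightarrow> a div b = i"
  by (metis Suc_eq_plus1 div_nat_eqI mult.commute)

lemma psi_iff: "a \<in> psi \<beta> N \<longleftrightarrow> 0 < \<beta> \<and> a div \<beta> \<in> N"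
proof
  assume "a \<in> psi \<beta> N"
  then obtain i where i: "i \<in> N" "i * \<beta> \<le> a" "a < (i + 1) * \<beta>" unfolding psi_def by auto
  then have "0 < \<beta>" by simp
  moreover have "a div \<beta> = i" using i div_eq_from_bounds by blast
  ultimately show "0 < \<beta> \<and> a div \<beta> \<in> N" using i by simp
next
  assume h: "0 < \<beta> \<and> a div \<beta> \<in> N"
  have "a div \<beta> * \<beta> \<le> a" by (rule div_times_less_eq_dividend)
  moreover have "a < (a div \<beta> + 1) * \<beta>" using h by (metis div_less_iff_less_mult less_add_one)
  ultimately have "a \<in> {a div \<beta> * \<beta>..<(a div \<beta> + 1) * \<beta>}" by simp
  then show "a \<in> psi \<beta> N" using h unfolding psi_def by blast
qed

lemma psi_sub: "N \<subseteq> {0..<n} \<Longrightarrow> psi \<beta> N \<subseteq> {..<\<beta> * n}"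
proof
  fix a assume N: "N \<subseteq> {0..<n}" and a: "a \<in> psi \<beta> N"
  then have b: "0 < \<beta>" "a div \<beta> < n" using psi_iff by auto
  then show "a \<in> {..<\<beta> * n}" by (simp add: div_less_iff_less_mult mult.commute)
qed

lemma card_psi:
  fixes B :: "nat set" assumes fB: "finite B" shows "card (psi \<beta> B) = \<beta> * card B"
proof -
  have d: "{i * \<beta>..<(i + 1) * \<beta>} \<inter> {j * \<beta>..<(j + 1) * \<beta>} = {}" if "i \<noteq> j" for i j :: nat
  proof (cases "i < j")
    case True
    then have "(i+1) * \<beta> \<le> j * \<beta>" using mult_le_mono1[of "i+1" j \<beta>] by simp
    then show ?thesis by auto
  next
    case False
    then have "(j+1) * \<beta> \<le> i * \<beta>" using that mult_le_mono1[of "j+1" i \<beta>] by simp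
    then show ?thesis by auto
  qed
  have "card (\<Union>i\<in>B. {i * \<beta>..<(i + 1) * \<beta>}) = (\<Sum>i\<in>B. card {i * \<beta>..<(i + 1) * \<beta>})"
    by (rule card_UN_disjoint) (use fB d in auto)
  also have "\<dots> = \<beta> * card B" by simp
  finally show ?thesis unfolding psi_def .
qed

lemma finite_psi: "finite N \<Longrightarrow> finite (psi \<beta> N)"
  unfolding psi_def by auto

lemma pick_bij: "finite S \<Longrightarrow> bij_betw (pick S) {..<card S} S"
proof -
  assume f: "finite S"
  have inj: "inj_on (pick S) {..<card S}"
    by (rule inj_onI) (metis lessThan_iff nat_neq_iff pick_mono)
  have sub: "pick S ` {..<card S} \<subseteq> S" using pick_in_set by auto
  have "card (pick S ` {..<card S}) = card S" using card_image[OF inj] by simp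
  then have "pick S ` {..<card S} = S" using card_subset_eq[OF f sub] by simp
  then show ?thesis using inj unfolding bij_betw_def by simp
qed

lemma pick_psi:
  assumes fN: "finite N" and c: "c < \<beta> * card N"
  shows "pick (psi \<beta> N) c = pick N (c div \<beta>) * \<beta> + c mod \<beta>"
proof -
  have b: "0 < \<beta>" using c by (cases \<beta>) auto
  have cd: "c div \<beta> < card N" using c b by (simp add: div_less_iff_less_mult mult.commute)
  define j where "j = pick N (c div \<beta>)"
  have jN: "j \<in> N" using pick_in_set cd j_def by blast
  have cj: "card {x\<in>N. x < j} = c div \<beta>" using card_pick cd j_def by blast
  define e where "e = j * \<beta> + c mod \<beta>"
  have ediv: "e div \<beta> = j" using b e_def by simp
  have eN: "e \<in> psi \<beta> N" using psi_iff b ediv jN by simp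
  have eb: "e < (j + 1) * \<beta>" using e_def b by simp
  have A: "a div \<beta> = j" if "j * \<beta> \<le> a" "a < e" for a
    using div_eq_from_bounds[of j \<beta> a] that eb by simp
  have B: "a \<in> psi \<beta> {x\<in>N. x < j} \<or> a \<in> {j * \<beta>..<e}" if "a \<in> psi \<beta> N" "a < e" for a
  proof (cases "a div \<beta> < j")
    case True
    then show ?thesis using that psi_iff[of a \<beta>] by auto
  next
    case False
    then have "j \<le> a div \<beta>" by simp
    then have "j * \<beta> \<le> a" using b by (simp add: less_eq_div_iff_mult_less_eq)
    then show ?thesis using that by auto
  qed
  have C: "j \<le> a div \<beta>" if "j * \<beta> \<le> a" for a
    using that b by (simp add: less_eq_div_iff_mult_less_eq)
  have spl: "{a\<in>psi \<beta> N. a < e} = psi \<beta> {x\<in>N. x < j} \<union> {j * \<beta>..<e}"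
  proof (rule Set.set_eqI)
    fix a
    show "a \<in> {a\<in>psi \<beta> N. a < e} \<longleftrightarrow> a \<in> psi \<beta> {x\<in>N. x < j} \<union> {j * \<beta>..<e}"
    proof
      assume "a \<in> {a\<in>psi \<beta> N. a < e}"
      then show "a \<in> psi \<beta> {x\<in>N. x < j} \<union> {j * \<beta>..<e}" using B by blast
    next
      assume a: "a \<in> psi \<beta> {x\<in>N. x < j} \<union> {j * \<beta>..<e}"
      then show "a \<in> {a\<in>psi \<beta> N. a < e}"
      proof
        assume "a \<in> psi \<beta> {x\<in>N. x < j}"
        then have "a div \<beta> \<in> N" "a div \<beta> < j" using psi_iff by auto
        then have "a div \<beta> < e div \<beta>" using ediv by simp
        then have "a < e" by (metis div_le_mono not_le)
        then show ?thesis using psi_iff b \<open>a div \<beta> \<in> N\<close> by auto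
      next
        assume "a \<in> {j * \<beta>..<e}"
        then have "a div \<beta> = j" using A by auto
        then show ?thesis using psi_iff b jN \<open>a \<in> {j * \<beta>..<e}\<close> by auto
      qed
    qed
  qed
  have disj: "psi \<beta> {x\<in>N. x < j} \<inter> {j * \<beta>..<e} = {}"
  proof -
    have "a \<notin> psi \<beta> {x\<in>N. x < j}" if "a \<in> {j * \<beta>..<e}" for a
      using C[of a] that psi_iff[of a \<beta>] by auto
    then show ?thesis by blast
  qed
  have "card {a\<in>psi \<beta> N. a < e} = \<beta> * card {x\<in>N. x < j} + c mod \<beta>"
    unfolding spl using card_Un_disjoint[OF _ _ disj] fN card_psi e_def finite_psi by simp
  also have "\<dots> = c" using cj by simp
  finally have "pick (psi \<beta> N) c = e" using pick_card_in_set[OF eN] by simp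
  then show ?thesis using e_def j_def by simp
qed

lemma carrier_vec_image: "carrier_vec k = (\<lambda>f. vec k f) ` (PiE {..<k} (\<lambda>_. UNIV))"
proof (rule Set.set_eqI)
  fix v :: "'a vec"
  show "v \<in> carrier_vec k \<longleftrightarrow> v \<in> (\<lambda>f. vec k f) ` (PiE {..<k} (\<lambda>_. UNIV))"
  proof
    assume v: "v \<in> carrier_vec k"
    have "v = vec k (restrict (\<lambda>i. v $ i) {..<k})" using v by (auto intro!: eq_vecI)
    moreover have "restrict (\<lambda>i. v $ i) {..<k} \<in> PiE {..<k} (\<lambda>_. UNIV)" by simp
    ultimately show "v \<in> (\<lambda>f. vec k f) ` (PiE {..<k} (\<lambda>_. UNIV))" by (rule image_eqI)
  next
    assume "v \<in> (\<lambda>f. vec k f) ` (PiE {..<k} (\<lambda>_. UNIV))"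
    then obtain f where "v = vec k f" by blast
    then show "v \<in> carrier_vec k" by simp
  qed
qed
lemma card_carrier_vec': "card (carrier_vec k :: 'a::finite vec set) = card (UNIV :: 'a set) ^ k"
proof -
  have inj: "inj_on (\<lambda>f. vec k f :: 'a vec) (PiE {..<k} (\<lambda>_. UNIV))"
  proof (rule inj_onI)
    fix f g :: "nat \<Rightarrow> 'a" assume f: "f \<in> PiE {..<k} (\<lambda>_. UNIV)" and g: "g \<in> PiE {..<k} (\<lambda>_. UNIV)"
      and e: "vec k f = vec k g"
    show "f = g"
    proof
      fix i show "f i = g i"
      proof (cases "i < k")
        case True then show ?thesis using arg_cong[OF e, of "\<lambda>v. v $ i"] by simp
      next
        case False then show ?thesis using f g by (auto simp: PiE_def extensional_def)
      qed
    qed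
  qed
  have "card (carrier_vec k :: 'a vec set) = card (PiE {..<k} (\<lambda>_. UNIV :: 'a set))"
    unfolding carrier_vec_image using card_image[OF inj] .
  also have "\<dots> = card (UNIV :: 'a set) ^ k" by (simp add: card_PiE)
  finally show ?thesis .
qed

lemma finite_carrier_vec': "finite (carrier_vec k :: 'a::finite vec set)"
  unfolding carrier_vec_image by (intro finite_imageI finite_PiE) auto

lemma exists_kernel:
  fixes G :: "'a::{field,finite} mat"
  assumes fR: "finite R" and cR: "card R < k"
  shows "\<exists>u\<in>carrier_vec k. u \<noteq> 0\<^sub>v k \<and> (\<forall>j\<in>R. (\<Sum>i<k. u $ i * G $$ (i, j)) = 0)"
proof -
  define h where "h u = restrict (\<lambda>j. \<Sum>i<k. u $ i * G $$ (i, j)) R" for u :: "'a vec"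
  have img: "h ` carrier_vec k \<subseteq> PiE R (\<lambda>_. UNIV)" unfolding h_def by auto
  have two: "2 \<le> card (UNIV :: 'a set)"
  proof -
    have "{0::'a, 1} \<subseteq> UNIV" by simp
    then have "card {0::'a, 1} \<le> card (UNIV :: 'a set)" by (intro card_mono) auto
    then show ?thesis by simp
  qed
  have "\<not> inj_on h (carrier_vec k)"
  proof
    assume inj: "inj_on h (carrier_vec k)"
    have "card (carrier_vec k :: 'a vec set) \<le> card (PiE R (\<lambda>_. UNIV :: 'a set))"
      using card_inj_on_le[OF inj img] fR by (simp add: finite_PiE)
    then have "card (UNIV :: 'a set) ^ k \<le> card (UNIV :: 'a set) ^ card R" by (simp add: card_carrier_vec' card_PiE fR)
    moreover have "card (UNIV :: 'a set) ^ card R < card (UNIV :: 'a set) ^ k" using two cR by (intro power_strict_increasing) auto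
    ultimately show False by simp
  qed
  then obtain u1 u2 where u: "u1 \<in> carrier_vec k" "u2 \<in> carrier_vec k" "u1 \<noteq> u2" "h u1 = h u2"
    unfolding inj_on_def by blast
  define u where "u = u1 - u2"
  have uc: "u \<in> carrier_vec k" using u u_def by simp
  have unz: "u \<noteq> 0\<^sub>v k"
  proof
    assume u0: "u = 0\<^sub>v k"
    have "u1 = u2"
    proof (rule eq_vecI)
      show "dim_vec u1 = dim_vec u2" using u by simp
      fix i assume "i < dim_vec u2"
      then have i: "i < k" using u by simp
      have "u $ i = 0" using u0 i by simp
      then have "u1 $ i - u2 $ i = 0" using u i unfolding u_def by simp
      then show "u1 $ i = u2 $ i" by simp
    qed
    then show False using u by simp
  qed
  have "(\<Sum>i<k. u $ i * G $$ (i, j)) = 0" if j: "j \<in> R" for j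
  proof -
    have "(\<Sum>i<k. u1 $ i * G $$ (i, j)) = (\<Sum>i<k. u2 $ i * G $$ (i, j))"
      using fun_cong[OF u(4), of j] j unfolding h_def by simp
    moreover have "(\<Sum>i<k. u $ i * G $$ (i, j)) = (\<Sum>i<k. u1 $ i * G $$ (i, j)) - (\<Sum>i<k. u2 $ i * G $$ (i, j))"
    proof -
      have "(\<Sum>i<k. u $ i * G $$ (i, j)) = (\<Sum>i<k. u1 $ i * G $$ (i, j) - u2 $ i * G $$ (i, j))"
        using u unfolding u_def by (intro sum.cong) (auto simp: left_diff_distrib)
      then show ?thesis by (simp add: sum_subtractf)
    qed
    ultimately show ?thesis by simp
  qed
  then show ?thesis using uc unz by blast
qed

lemma mds_nonzero:
  fixes G :: "'a::field mat"
  assumes mds: "mds_generator G n k"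
    and u: "u \<in> carrier_vec k" "u \<noteq> 0\<^sub>v k"
    and R: "R \<subseteq> {0..<n}" "card R = k - 1" and k1: "1 \<le> k"
    and hR: "\<forall>j\<in>R. (\<Sum>i<k. u $ i * G $$ (i, j)) = 0"
    and j: "j \<in> {0..<n} - R"
  shows "(\<Sum>i<k. u $ i * G $$ (i, j)) \<noteq> 0"
proof -
  have G: "G \<in> carrier_mat k n" and rk: "mat_rank G = k" and md: "min_distance G = n - k + 1"
    using mds unfolding mds_generator_def by auto
  define cw where "cw = transpose_mat G *\<^sub>v u"
  have dcw: "dim_vec cw = n" using G cw_def by simp
  have cwi: "cw $ i = (\<Sum>l<k. u $ l * G $$ (l, i))" if "i < n" for i
    using that G u unfolding cw_def by (auto simp: scalar_prod_def mult.commute intro!: sum.cong)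
  have incode: "cw \<in> code_of G" using u G unfolding code_of_def cw_def by auto
  have cwnz: "cw \<noteq> 0\<^sub>v n"
  proof
    assume "cw = 0\<^sub>v n"
    then have "\<And>i. i < n \<Longrightarrow> (\<Sum>l<k. u $ l * G $$ (l, i)) = 0" using cwi by (metis index_zero_vec(1))
    then have "u = 0\<^sub>v k" using rank_full_rows_indep[OF G _ u(1)] rk G unfolding mat_rank_def by auto
    then show False using u by simp
  qed
  define NZ where "NZ = {i. i < n \<and> cw $ i \<noteq> 0}"
  have hw: "hweight cw = card NZ" unfolding hweight_def NZ_def dcw ..
  have fin: "finite {hweight c | c. c \<in> code_of G \<and> c \<noteq> 0\<^sub>v (dim_col G)}"
  proof (rule finite_subset)
    show "{hweight c | c. c \<in> code_of G \<and> c \<noteq> 0\<^sub>v (dim_col G)} \<subseteq> {..n}"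
    proof
      fix x assume "x \<in> {hweight c | c. c \<in> code_of G \<and> c \<noteq> 0\<^sub>v (dim_col G)}"
      then obtain c where c: "x = hweight c" "c \<in> code_of G" by blast
      then have "dim_vec c = n" using G unfolding code_of_def by auto
      then have "hweight c \<le> card {..<n}" unfolding hweight_def by (intro card_mono) auto
      then show "x \<in> {..n}" using c by simp
    qed
  qed simp
  have "min_distance G \<le> hweight cw"
    unfolding min_distance_def using fin incode cwnz G by (intro Min_le) auto
  then have ge: "n - k + 1 \<le> card NZ" using md hw by simp
  have sub: "NZ \<subseteq> {0..<n} - R" using hR cwi unfolding NZ_def by auto
  have "card ({0..<n} - R) = n - (k - 1)" using R by (simp add: card_Diff_subset finite_subset)
  then have "card ({0..<n} - R) \<le> card NZ" using ge by simp
  then have "NZ = {0..<n} - R" using card_seteq[OF _ sub] by simp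
  then have "j \<in> NZ" using j by simp
  then have "cw $ j \<noteq> 0" "j < n" unfolding NZ_def by auto
  then show ?thesis using cwi by simp
qed

lemma least_eq_self: "(LEAST a::nat. a = l) = l"
  by (rule Least_equality) auto

lemma pick_singleton: "pick {l} 0 = l"
  by (simp add: least_eq_self)

lemma answer_eq:
  fixes G :: "'a::field mat"
  assumes G: "G \<in> carrier_mat k n" and Q: "Q \<in> carrier_mat (\<alpha> * m) (\<beta> * n)"
    and X: "X \<in> carrier_mat (\<alpha> * m) k"
    and F: "F \<subseteq> {0..<m}" and N: "N \<subseteq> {0..<n}"
  shows "answer G Q X \<alpha> \<beta> F N = vec (\<beta> * card N) (\<lambda>c. \<Sum>l\<in>psi \<alpha> F.
      (\<Sum>i<k. X $$ (l, i) * G $$ (i, pick (psi \<beta> N) c div \<beta>)) * Q $$ (l, pick (psi \<beta> N) c))"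
  unfolding answer_def Let_def
proof (rule eq_vecI)
  fix c assume "c < dim_vec (vec (\<beta> * card N) (\<lambda>c. \<Sum>l\<in>psi \<alpha> F.
      (\<Sum>i<k. X $$ (l, i) * G $$ (i, pick (psi \<beta> N) c div \<beta>)) * Q $$ (l, pick (psi \<beta> N) c)))"
  then have c: "c < \<beta> * card N" by simp
  have fN: "finite N" using N finite_subset by blast
  have b: "0 < \<beta>" using c by (cases \<beta>) auto
  have cd: "c div \<beta> < card N" using c b by (simp add: div_less_iff_less_mult mult.commute)
  have pp: "pick (psi \<beta> N) c div \<beta> = pick N (c div \<beta>)" using pick_psi[OF fN c] b by simp
  have NN: "{j. j < n \<and> j \<in> N} = N" using N by auto
  have PN: "{j. j < \<beta> * n \<and> j \<in> psi \<beta> N} = psi \<beta> N" using psi_sub[OF N] by auto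
  have cP: "card (psi \<beta> N) = \<beta> * card N" using card_psi[OF fN] .
  have tm: "hadamard (kron_ones (row_sub (X * G) l N) \<beta>) (row_sub Q l (psi \<beta> N)) $ c
      = (\<Sum>i<k. X $$ (l, i) * G $$ (i, pick (psi \<beta> N) c div \<beta>)) * Q $$ (l, pick (psi \<beta> N) c)"
    if l: "l \<in> psi \<alpha> F" for l
  proof -
    have lm: "l < \<alpha> * m" using psi_sub[OF F] l by auto
    have l1: "{i. i < \<alpha> * m \<and> i \<in> {l}} = {l}" using lm by auto
    have dY: "dim_row (X * G) = \<alpha> * m" "dim_col (X * G) = n" using X G by auto
    have drs: "dim_vec (row_sub (X * G) l N) = card N"
      unfolding row_sub_def using dY NN by (simp add: dim_submatrix)
    have rsY: "row_sub (X * G) l N $ (c div \<beta>) = (X * G) $$ (l, pick N (c div \<beta>))"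
      unfolding row_sub_def using dY NN l1 cd by (simp add: dim_submatrix submatrix_index pick_singleton least_eq_self)
    have rsQ: "row_sub Q l (psi \<beta> N) $ c = Q $$ (l, pick (psi \<beta> N) c)"
      unfolding row_sub_def using Q PN l1 cP c by (simp add: dim_submatrix submatrix_index pick_singleton least_eq_self)
    have pN: "pick N (c div \<beta>) < n" using pick_in_set[of "c div \<beta>" N] cd N by auto
    have XG: "(X * G) $$ (l, pick N (c div \<beta>)) = (\<Sum>i<k. X $$ (l, i) * G $$ (i, pick N (c div \<beta>)))"
      using X G lm pN by (simp add: scalar_prod_def lessThan_atLeast0)
    have dk: "dim_vec (kron_ones (row_sub (X * G) l N) \<beta>) = card N * \<beta>"
      unfolding kron_ones_def using drs by simp
    have "hadamard (kron_ones (row_sub (X * G) l N) \<beta>) (row_sub Q l (psi \<beta> N)) $ c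
        = kron_ones (row_sub (X * G) l N) \<beta> $ c * row_sub Q l (psi \<beta> N) $ c"
      unfolding hadamard_def using dk c by (simp add: mult.commute)
    also have "kron_ones (row_sub (X * G) l N) \<beta> $ c = row_sub (X * G) l N $ (c div \<beta>)"
      unfolding kron_ones_def using drs c by (simp add: mult.commute)
    finally show ?thesis using rsY rsQ XG pp by simp
  qed
  show "vec (\<beta> * card N) (\<lambda>c. \<Sum>l\<in>psi \<alpha> F. hadamard (kron_ones (row_sub (X * G) l N) \<beta>) (row_sub Q l (psi \<beta> N)) $ c) $ c =
    vec (\<beta> * card N) (\<lambda>c. \<Sum>l\<in>psi \<alpha> F. (\<Sum>i<k. X $$ (l, i) * G $$ (i, pick (psi \<beta> N) c div \<beta>)) * Q $$ (l, pick (psi \<beta> N) c)) $ c"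
    using c tm by simp
qed simp

lemma pick_image_filter:
  assumes fJ: "finite J"
  shows "pick J ` {c. c < card J \<and> P (pick J c)} = {a\<in>J. P a}"
proof -
  have bij: "bij_betw (pick J) {..<card J} J" using pick_bij[OF fJ] .
  show ?thesis
  proof (rule Set.set_eqI, rule iffI)
    fix a assume "a \<in> pick J ` {c. c < card J \<and> P (pick J c)}"
    then show "a \<in> {a\<in>J. P a}" using bij by (auto simp: bij_betw_def)
  next
    fix a assume a: "a \<in> {a\<in>J. P a}"
    then obtain c where "c < card J" "pick J c = a" using bij unfolding bij_betw_def by (metis (no_types, lifting) imageE lessThan_iff mem_Collect_eq)
    then show "a \<in> pick J ` {c. c < card J \<and> P (pick J c)}" using a by auto
  qed
qed

lemma bij_pick_filter:
  assumes fJ: "finite J"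
  shows "bij_betw (pick J) {c. c < card J \<and> P (pick J c)} {a\<in>J. P a}"
  using bij_betw_subset[OF pick_bij[OF fJ], of "{c. c < card J \<and> P (pick J c)}"] pick_image_filter[OF fJ]
  by auto

lemma sub_facts:
  assumes Q: "Q \<in> carrier_mat M Nc" and L: "L \<subseteq> {..<M}" and J: "J \<subseteq> {..<Nc}"
  shows "submatrix Q L J \<in> carrier_mat (card L) (card J)"
    and "\<And>r c. r < card L \<Longrightarrow> c < card J \<Longrightarrow> submatrix Q L J $$ (r, c) = Q $$ (pick L r, pick J c)"
    and "colsupp (submatrix Q L J) = {c. c < card J \<and> (\<exists>l\<in>L. Q $$ (l, pick J c) \<noteq> 0)}"
proof -
  have e1: "{i. i < dim_row Q \<and> i \<in> L} = L" using Q L by auto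
  have e2: "{j. j < dim_col Q \<and> j \<in> J} = J" using Q J by auto
  show c1: "submatrix Q L J \<in> carrier_mat (card L) (card J)"
    unfolding carrier_mat_def using dim_submatrix[of Q L J] e1 e2 by simp
  show ix: "\<And>r c. r < card L \<Longrightarrow> c < card J \<Longrightarrow> submatrix Q L J $$ (r, c) = Q $$ (pick L r, pick J c)"
    using submatrix_index[of _ Q L _ J] e1 e2 by simp
  have fL: "finite L" using L finite_subset by blast
  have bijL: "bij_betw (pick L) {..<card L} L" using pick_bij[OF fL] .
  show "colsupp (submatrix Q L J) = {c. c < card J \<and> (\<exists>l\<in>L. Q $$ (l, pick J c) \<noteq> 0)}"
  proof (rule Set.set_eqI)
    fix c
    have "(c < card J \<and> col (submatrix Q L J) c \<noteq> 0\<^sub>v (card L)) \<longleftrightarrow> (c < card J \<and> (\<exists>l\<in>L. Q $$ (l, pick J c) \<noteq> 0))"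
    proof (cases "c < card J")
      case True
      have "col (submatrix Q L J) c \<noteq> 0\<^sub>v (card L) \<longleftrightarrow> (\<exists>r<card L. Q $$ (pick L r, pick J c) \<noteq> 0)"
      proof
        assume "col (submatrix Q L J) c \<noteq> 0\<^sub>v (card L)"
        then obtain r where "r < card L" "col (submatrix Q L J) c $ r \<noteq> 0"
          using c1 True by (metis carrier_matD(1) carrier_matD(2) dim_col eq_vecI index_zero_vec(1) index_zero_vec(2))
        then show "\<exists>r<card L. Q $$ (pick L r, pick J c) \<noteq> 0" using ix True c1 by auto
      next
        assume "\<exists>r<card L. Q $$ (pick L r, pick J c) \<noteq> 0"
        then obtain r where r: "r < card L" "Q $$ (pick L r, pick J c) \<noteq> 0" by blast
        then have "col (submatrix Q L J) c $ r \<noteq> 0" using ix True c1 by auto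
        then show "col (submatrix Q L J) c \<noteq> 0\<^sub>v (card L)" using r by auto
      qed
      also have "\<dots> \<longleftrightarrow> (\<exists>l\<in>L. Q $$ (l, pick J c) \<noteq> 0)"
      proof
        assume "\<exists>r<card L. Q $$ (pick L r, pick J c) \<noteq> 0"
        then show "\<exists>l\<in>L. Q $$ (l, pick J c) \<noteq> 0" using bijL unfolding bij_betw_def by auto
      next
        assume "\<exists>l\<in>L. Q $$ (l, pick J c) \<noteq> 0"
        then obtain l where l: "l \<in> L" "Q $$ (l, pick J c) \<noteq> 0" by blast
        then obtain r where "r < card L" "pick L r = l" using bijL unfolding bij_betw_def
          by (metis imageE lessThan_iff)
        then show "\<exists>r<card L. Q $$ (pick L r, pick J c) \<noteq> 0" using l by blast
      qed
      finally show ?thesis using True by simp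
    qed simp
    then show "c \<in> colsupp (submatrix Q L J) \<longleftrightarrow> c \<in> {c. c < card J \<and> (\<exists>l\<in>L. Q $$ (l, pick J c) \<noteq> 0)}"
      unfolding colsupp_def using c1 by auto
  qed
qed

lemma indep_T:
  fixes Q :: "'a::field mat"
  assumes Q: "Q \<in> carrier_mat M Nc" and L: "L \<subseteq> {..<M}" and J: "J \<subseteq> {..<Nc}"
    and rk: "mat_rank (submatrix Q L J) = card (colsupp (submatrix Q L J))"
    and h: "\<And>l. l \<in> L \<Longrightarrow> (\<Sum>a\<in>{a\<in>J. \<exists>l\<in>L. Q $$ (l, a) \<noteq> 0}. \<nu> a * Q $$ (l, a)) = 0"
    and a0: "a0 \<in> J" and l0: "l0 \<in> L" "Q $$ (l0, a0) \<noteq> 0"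
  shows "\<nu> a0 = 0"
proof -
  define A where "A = submatrix Q L J"
  note sf = sub_facts[OF Q L J]
  have A: "A \<in> carrier_mat (card L) (card J)" using sf(1) A_def by simp
  have fJ: "finite J" using J finite_subset by blast
  have fL: "finite L" using L finite_subset by blast
  have cs: "colsupp A = {c. c < card J \<and> (\<exists>l\<in>L. Q $$ (l, pick J c) \<noteq> 0)}" using sf(3) A_def by simp
  have bij: "bij_betw (pick J) (colsupp A) {a\<in>J. \<exists>l\<in>L. Q $$ (l, a) \<noteq> 0}"
    unfolding cs by (rule bij_pick_filter[OF fJ])
  have rk': "vec_space.rank (card L) A = card (colsupp A)"
    using rk A unfolding A_def mat_rank_def by auto
  have hh: "(\<Sum>c\<in>colsupp A. \<nu> (pick J c) * A $$ (r, c)) = 0" if r: "r < card L" for r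
  proof -
    have "(\<Sum>c\<in>colsupp A. \<nu> (pick J c) * A $$ (r, c)) = (\<Sum>c\<in>colsupp A. \<nu> (pick J c) * Q $$ (pick L r, pick J c))"
      using sf(2) r cs unfolding A_def by (intro sum.cong) auto
    also have "\<dots> = (\<Sum>a\<in>{a\<in>J. \<exists>l\<in>L. Q $$ (l, a) \<noteq> 0}. \<nu> a * Q $$ (pick L r, a))"
      using sum.reindex_bij_betw[OF bij, of "\<lambda>a. \<nu> a * Q $$ (pick L r, a)"] by simp
    also have "\<dots> = 0" using h pick_in_set[of r L] r by auto
    finally show ?thesis .
  qed
  define c0 where "c0 = card {x\<in>J. x < a0}"
  have pc0: "pick J c0 = a0" using pick_card_in_set[OF a0] c0_def by simp
  have "{x\<in>J. x < a0} \<subset> J" using a0 by auto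
  then have c0J: "c0 < card J" unfolding c0_def using fJ psubset_card_mono by blast
  have c0s: "c0 \<in> colsupp A" using cs c0J pc0 l0 by auto
  have "\<nu> (pick J c0) = 0"
    using rank_colsupp_indep[OF A rk' hh c0s] .
  then show ?thesis using pc0 by simp
qed

lemma card_fibers_sum:
  assumes fC: "finite C"
  shows "(\<Sum>z\<in>f ` C. card {y\<in>C. f y = z}) = card C"
proof -
  have "C = (\<Union>z\<in>f ` C. {y\<in>C. f y = z})" by auto
  then have "card C = card (\<Union>z\<in>f ` C. {y\<in>C. f y = z})" by simp
  also have "\<dots> = (\<Sum>z\<in>f ` C. card {y\<in>C. f y = z})"
    by (rule card_UN_disjoint) (use fC in auto)
  finally show ?thesis by simp
qed

lemma entropy_const_fibers:
  assumes fC: "finite C" and ne: "C \<noteq> {}" and b: "1 < b"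
    and fib: "\<And>x. x \<in> C \<Longrightarrow> card {y\<in>C. f y = f x} = c0"
  shows "entropy_unif b C f = log b (real (card (f ` C)))"
proof -
  define M where "M = card (f ` C)"
  have Mpos: "0 < M" using fC ne M_def by (simp add: card_gt_0_iff)
  have fib': "card {y\<in>C. f y = z} = c0" if "z \<in> f ` C" for z using that fib by auto
  have "card C = M * c0" using card_fibers_sum[OF fC, of f] fib' M_def by simp
  then have cpos: "0 < c0" using fC ne by (metis card_gt_0_iff mult_0_right neq0_conv)
  have p: "prob_unif C f z = 1 / real M" if "z \<in> f ` C" for z
    unfolding prob_unif_def using fib'[OF that] \<open>card C = M * c0\<close> cpos by simp
  have "entropy_unif b C f = - (\<Sum>z\<in>f ` C. (1 / real M) * log b (1 / real M))"
    unfolding entropy_unif_def using p by simp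
  also have "\<dots> = - (real M * ((1 / real M) * log b (1 / real M)))" using M_def by simp
  also have "\<dots> = - log b (1 / real M)" using Mpos by simp
  also have "\<dots> = log b (real M)" using Mpos b by (simp add: log_divide)
  finally show ?thesis using M_def by simp
qed

lemma carrier_mat_image: "carrier_mat nr nc = (\<lambda>f. mat nr nc f) ` (PiE ({..<nr} \<times> {..<nc}) (\<lambda>_. UNIV))"
proof (rule Set.set_eqI)
  fix A :: "'a mat"
  show "A \<in> carrier_mat nr nc \<longleftrightarrow> A \<in> (\<lambda>f. mat nr nc f) ` (PiE ({..<nr} \<times> {..<nc}) (\<lambda>_. UNIV))"
  proof
    assume A: "A \<in> carrier_mat nr nc"
    have "A = mat nr nc (restrict (\<lambda>ij. A $$ ij) ({..<nr} \<times> {..<nc}))" using A by (auto intro!: eq_matI)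
    moreover have "restrict (\<lambda>ij. A $$ ij) ({..<nr} \<times> {..<nc}) \<in> PiE ({..<nr} \<times> {..<nc}) (\<lambda>_. UNIV)" by simp
    ultimately show "A \<in> (\<lambda>f. mat nr nc f) ` (PiE ({..<nr} \<times> {..<nc}) (\<lambda>_. UNIV))" by (rule image_eqI)
  next
    assume "A \<in> (\<lambda>f. mat nr nc f) ` (PiE ({..<nr} \<times> {..<nc}) (\<lambda>_. UNIV))"
    then obtain f where "A = mat nr nc f" by blast
    then show "A \<in> carrier_mat nr nc" by simp
  qed
qed

lemma finite_carrier_mat': "finite (carrier_mat nr nc :: 'a::finite mat set)"
  unfolding carrier_mat_image by (intro finite_imageI finite_PiE) auto

lemma card_supp_vecs:
  fixes Z :: "nat set"
  assumes Z: "Z \<subseteq> {..<d}"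
  shows "card {w \<in> carrier_vec d. \<forall>c<d. c \<notin> Z \<longrightarrow> w $ c = (0::'a::{zero,finite})} = card (UNIV :: 'a set) ^ card Z"
proof -
  define V where "V = {w \<in> carrier_vec d. \<forall>c<d. c \<notin> Z \<longrightarrow> w $ c = (0::'a)}"
  define g where "g f = vec d (\<lambda>c. if c \<in> Z then f c else 0)" for f :: "nat \<Rightarrow> 'a"
  have fZ: "finite Z" using Z finite_subset by blast
  have inj: "inj_on g (PiE Z (\<lambda>_. UNIV))"
  proof (rule inj_onI)
    fix f1 f2 assume f1: "f1 \<in> PiE Z (\<lambda>_. UNIV)" and f2: "f2 \<in> PiE Z (\<lambda>_. UNIV)" and e: "g f1 = g f2"
    show "f1 = f2"
    proof
      fix c show "f1 c = f2 c"
      proof (cases "c \<in> Z")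
        case True
        then have "c < d" using Z by auto
        then show ?thesis using arg_cong[OF e, of "\<lambda>v. v $ c"] True unfolding g_def by simp
      next
        case False then show ?thesis using f1 f2 by (auto simp: PiE_def extensional_def)
      qed
    qed
  qed
  have im: "g ` (PiE Z (\<lambda>_. UNIV)) = V"
  proof (rule Set.set_eqI, rule iffI)
    fix w assume "w \<in> g ` (PiE Z (\<lambda>_. UNIV))"
    then show "w \<in> V" unfolding g_def V_def by auto
  next
    fix w assume w: "w \<in> V"
    have "w = g (restrict (\<lambda>c. w $ c) Z)"
      using w unfolding V_def g_def by (auto intro!: eq_vecI)
    moreover have "restrict (\<lambda>c. w $ c) Z \<in> PiE Z (\<lambda>_. UNIV)" by simp
    ultimately show "w \<in> g ` (PiE Z (\<lambda>_. UNIV))" by (rule image_eqI)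
  qed
  have "card V = card (PiE Z (\<lambda>_. UNIV :: 'a set))" using card_image[OF inj] im by simp
  also have "\<dots> = card (UNIV :: 'a set) ^ card Z" using fZ by (simp add: card_PiE)
  finally show ?thesis unfolding V_def .
qed

theorem lemma8:
  fixes G :: "'a::{field,finite} mat" and Q :: "'a mat"
    and n k t m \<alpha> \<beta> :: nat
  assumes mds: "mds_generator G n k"
    and k_pos: "1 \<le> k"
    and t_pos: "1 \<le> t"
    and Q_dim: "Q \<in> carrier_mat (\<alpha> * m) (\<beta> * n)"
    and Q_cond: "\<And>T F. T \<subseteq> {0..<n} \<Longrightarrow> card T = t \<Longrightarrow> F \<subseteq> {0..<m} \<Longrightarrow> F \<noteq> {} \<Longrightarrow>
        mat_rank (submatrix Q (psi \<alpha> F) (psi \<beta> T))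
          = card (colsupp (submatrix Q (psi \<alpha> F) (psi \<beta> T)))"
    and F: "F \<subseteq> {0..<m}" "F \<noteq> {}"
    and N: "N \<subseteq> {0..<n}" "card N = k + t - 1"
  shows "entropy_unif (real (card (UNIV :: 'a set))) (carrier_mat (\<alpha> * m) k)
           (\<lambda>X. answer G Q X \<alpha> \<beta> F N)
         = real (card (colsupp (submatrix Q (psi \<alpha> F) (psi \<beta> N))))"
proof -
  have G: "G \<in> carrier_mat k n" using mds unfolding mds_generator_def by auto
  define L where "L = psi \<alpha> F"
  have Lsub: "L \<subseteq> {..<\<alpha> * m}" using psi_sub[OF F(1)] L_def by simp
  have fL: "finite L" using Lsub finite_subset by blast
  have fN: "finite N" using N(1) finite_subset by blast
  define K where "K = card N"
  define PN where "PN = psi \<beta> N"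
  have PNsub: "PN \<subseteq> {..<\<beta> * n}" using psi_sub[OF N(1)] PN_def by simp
  have fPN: "finite PN" using PNsub finite_subset by blast
  have cPN: "card PN = \<beta> * K" using card_psi[OF fN] PN_def K_def by simp
  define pc where "pc c = pick PN c" for c
  define \<Phi> where "\<Phi> X a = (\<Sum>l\<in>L. (\<Sum>i<k. X $$ (l, i) * G $$ (i, a div \<beta>)) * Q $$ (l, a))"
    for X :: "'a mat" and a
  define nz where "nz a = (\<exists>l\<in>L. Q $$ (l, a) \<noteq> 0)" for a
  define PA where "PA = {a\<in>PN. nz a}"
  define Z where "Z = {c. c < \<beta> * K \<and> nz (pc c)}"
  define C where "C = (carrier_mat (\<alpha> * m) k :: 'a mat set)"
  define f where "f X = answer G Q X \<alpha> \<beta> F N" for X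
  have ans: "f X = vec (\<beta> * K) (\<lambda>c. \<Phi> X (pc c))" if "X \<in> C" for X
    using answer_eq[OF G Q_dim _ F(1) N(1), of X] that
    unfolding f_def \<Phi>_def pc_def PN_def K_def L_def C_def by simp
  have cs: "colsupp (submatrix Q L PN) = Z"
    using sub_facts(3)[OF Q_dim Lsub PNsub] cPN unfolding Z_def nz_def pc_def by simp
  have fPA: "finite PA" using fPN PA_def by simp
  have b_pos_of: "0 < \<beta> \<and> a div \<beta> \<in> N" if "a \<in> PN" for a
    using that psi_iff PN_def by simp

  have indep: "\<forall>a\<in>PA. lam a = 0"
    if h: "\<forall>d\<in>L \<times> {..<k}. (\<Sum>a\<in>PA. lam a * (G $$ (snd d, a div \<beta>) * Q $$ (fst d, a))) = 0" for lam
  proof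
    fix a0 assume a0: "a0 \<in> PA"
    define j0 where "j0 = a0 div \<beta>"
    have b: "0 < \<beta>" and j0N: "j0 \<in> N" using b_pos_of a0 PA_def j0_def by auto
    have "t - 1 \<le> card (N - {j0})" using N(2) j0N fN k_pos by simp
    then obtain T0 where T0: "T0 \<subseteq> N - {j0}" "card T0 = t - 1" "finite T0"
      by (rule obtain_subset_with_card_n)
    define T where "T = insert j0 T0"
    have TN: "T \<subseteq> N" using T0 j0N T_def by auto
    have "j0 \<notin> T0" using T0 by auto
    then have cT: "card T = t" using T0 t_pos T_def by simp
    have Tn: "T \<subseteq> {0..<n}" using TN N(1) by auto
    define R where "R = N - T"
    have fR: "finite R" using fN R_def by simp
    have cR: "card R = k - 1" using card_Diff_subset[OF _ TN] T0 cT N(2) R_def T_def by simp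
    have Rn: "R \<subseteq> {0..<n}" using N(1) R_def by auto
    obtain u where u: "u \<in> carrier_vec k" "u \<noteq> 0\<^sub>v k" "\<forall>j\<in>R. (\<Sum>i<k. u $ i * G $$ (i, j)) = 0"
      using exists_kernel[OF fR, of k G] cR k_pos by auto
    define cw where "cw j = (\<Sum>i<k. u $ i * G $$ (i, j))" for j
    have cwT: "cw j \<noteq> 0" if "j \<in> T" for j
      using mds_nonzero[OF mds u(1,2) Rn cR k_pos u(3)] that Tn R_def cw_def by auto
    define PT where "PT = {a\<in>psi \<beta> T. nz a}"
    have PTsub: "PT \<subseteq> PA" using TN psi_iff unfolding PT_def PA_def PN_def by auto
    have hl: "(\<Sum>a\<in>{a\<in>psi \<beta> T. \<exists>l\<in>L. Q $$ (l, a) \<noteq> 0}. (lam a * cw (a div \<beta>)) * Q $$ (l, a)) = 0"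
      if l: "l \<in> L" for l
    proof -
      have "(\<Sum>a\<in>PA. (lam a * cw (a div \<beta>)) * Q $$ (l, a))
          = (\<Sum>i<k. u $ i * (\<Sum>a\<in>PA. lam a * (G $$ (i, a div \<beta>) * Q $$ (l, a))))"
        unfolding cw_def by (simp add: sum_distrib_left sum_distrib_right sum.swap[of _ PA] mult_ac)
      also have "\<dots> = 0" using h l by (auto intro!: sum.neutral)
      finally have s0: "(\<Sum>a\<in>PA. (lam a * cw (a div \<beta>)) * Q $$ (l, a)) = 0" .
      have "(\<Sum>a\<in>PT. (lam a * cw (a div \<beta>)) * Q $$ (l, a)) = (\<Sum>a\<in>PA. (lam a * cw (a div \<beta>)) * Q $$ (l, a))"
      proof (rule sum.mono_neutral_left[OF fPA PTsub], rule ballI)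
        fix a assume a: "a \<in> PA - PT"
        then have "a div \<beta> \<in> N" "a div \<beta> \<notin> T" using b_pos_of psi_iff b unfolding PA_def PT_def by auto
        then have "a div \<beta> \<in> R" using R_def by simp
        then show "lam a * cw (a div \<beta>) * Q $$ (l, a) = 0" using u(3) cw_def by simp
      qed
      then show ?thesis using s0 unfolding PT_def nz_def by simp
    qed
    have psT: "psi \<beta> T \<subseteq> {..<\<beta> * n}" using psi_sub[OF Tn] .
    obtain l0 where l0: "l0 \<in> L" "Q $$ (l0, a0) \<noteq> 0" using a0 unfolding PA_def nz_def by auto
    have a0T: "a0 \<in> psi \<beta> T" using psi_iff b j0_def T_def by simp
    have rk: "mat_rank (submatrix Q L (psi \<beta> T)) = card (colsupp (submatrix Q L (psi \<beta> T)))"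
      using Q_cond[OF Tn cT F] L_def by simp
    have "lam a0 * cw (a0 div \<beta>) = 0"
      using indep_T[OF Q_dim Lsub psT rk hl a0T l0] .
    moreover have "cw (a0 div \<beta>) \<noteq> 0" using cwT j0_def T_def by simp
    ultimately show "lam a0 = 0" by simp
  qed

  have surj: "\<exists>X\<in>C. \<forall>a\<in>PA. \<Phi> X a = v a" for v
  proof -
    define r where "r a d = G $$ (snd d, a div \<beta>) * Q $$ (fst d, a)" for a and d :: "nat \<times> nat"
    have fD: "finite (L \<times> {..<k})" using fL by simp
    obtain x where x: "\<forall>a\<in>PA. (\<Sum>d\<in>L \<times> {..<k}. r a d * x d) = v a"
      using solve_lin[OF fPA fD, of r v] indep unfolding r_def by blast
    define X where "X = mat (\<alpha> * m) k (\<lambda>(l, i). x (l, i))"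
    have XC: "X \<in> C" unfolding X_def C_def by simp
    have "\<Phi> X a = v a" if a: "a \<in> PA" for a
    proof -
      have Xi: "X $$ (l, i) = x (l, i)" if "l \<in> L" "i < k" for l i
        using that Lsub unfolding X_def by auto
      have "\<Phi> X a = (\<Sum>l\<in>L. \<Sum>i<k. r a (l, i) * x (l, i))"
        unfolding \<Phi>_def
      proof (rule sum.cong[OF refl])
        fix l assume l: "l \<in> L"
        have "(\<Sum>i<k. X $$ (l, i) * G $$ (i, a div \<beta>)) * Q $$ (l, a)
            = (\<Sum>i<k. X $$ (l, i) * G $$ (i, a div \<beta>) * Q $$ (l, a))" by (simp add: sum_distrib_right)
        also have "\<dots> = (\<Sum>i<k. r a (l, i) * x (l, i))"
          using Xi l unfolding r_def by (intro sum.cong refl) (simp add: mult_ac)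
        finally show "(\<Sum>i<k. X $$ (l, i) * G $$ (i, a div \<beta>)) * Q $$ (l, a) = (\<Sum>i<k. r a (l, i) * x (l, i))" .
      qed
      also have "\<dots> = (\<Sum>d\<in>L \<times> {..<k}. r a d * x d)" by (simp add: sum.cartesian_product)
      finally show ?thesis using x a by simp
    qed
    then show ?thesis using XC by blast
  qed

  define V where "V = {w \<in> carrier_vec (\<beta> * K). \<forall>c<\<beta> * K. c \<notin> Z \<longrightarrow> w $ c = (0::'a)}"
  have img: "f ` C = V"
  proof (rule Set.set_eqI, rule iffI)
    fix w assume "w \<in> f ` C"
    then obtain X where X: "X \<in> C" "w = f X" by blast
    have "\<Phi> X (pc c) = 0" if "c \<notin> Z" "c < \<beta> * K" for c
      using that unfolding Z_def nz_def \<Phi>_def by (auto intro!: sum.neutral)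
    then show "w \<in> V" unfolding V_def using X ans by auto
  next
    fix w assume w: "w \<in> V"
    define v where "v a = w $ card {x\<in>PN. x < a}" for a
    obtain X where X: "X \<in> C" "\<forall>a\<in>PA. \<Phi> X a = v a" using surj by blast
    have "w = f X"
    proof (rule eq_vecI)
      show "dim_vec w = dim_vec (f X)" using w X ans unfolding V_def by simp
      fix c assume "c < dim_vec (f X)"
      then have c: "c < \<beta> * K" using ans X by simp
      show "w $ c = f X $ c"
      proof (cases "c \<in> Z")
        case True
        have "pc c \<in> PN" using pick_in_set[of c PN] c cPN pc_def by simp
        then have "pc c \<in> PA" using True Z_def PA_def by simp
        then have "\<Phi> X (pc c) = w $ card {x\<in>PN. x < pick PN c}" using X v_def pc_def by simp
        also have "card {x\<in>PN. x < pick PN c} = c" using card_pick[of c PN] c cPN by simp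
        finally show ?thesis using ans X c by simp
      next
        case False
        then have "\<Phi> X (pc c) = 0" using c unfolding Z_def nz_def \<Phi>_def by (auto intro!: sum.neutral)
        then show ?thesis using False w c ans X unfolding V_def by simp
      qed
    qed
    then show "w \<in> f ` C" using X by blast
  qed
  have Zsub: "Z \<subseteq> {..<\<beta> * K}" unfolding Z_def by auto
  have cimg: "card (f ` C) = card (UNIV :: 'a set) ^ card Z"
    using img card_supp_vecs[OF Zsub] unfolding V_def by simp

  have fC: "finite C" unfolding C_def by (rule finite_carrier_mat')
  have Phi_add: "\<Phi> (Y + X) a = \<Phi> Y a + \<Phi> X a" if "X \<in> C" "Y \<in> C" for X Y a
  proof -
    have "\<Phi> (Y + X) a = (\<Sum>l\<in>L. (\<Sum>i<k. (Y $$ (l, i) + X $$ (l, i)) * G $$ (i, a div \<beta>)) * Q $$ (l, a))"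
      unfolding \<Phi>_def using that Lsub unfolding C_def by (intro sum.cong refl) auto
    then show ?thesis unfolding \<Phi>_def by (simp add: algebra_simps sum.distrib)
  qed
  have Phi_minus: "\<Phi> (Y - X) a = \<Phi> Y a - \<Phi> X a" if "X \<in> C" "Y \<in> C" for X Y a
  proof -
    have "\<Phi> (Y - X) a = (\<Sum>l\<in>L. (\<Sum>i<k. (Y $$ (l, i) - X $$ (l, i)) * G $$ (i, a div \<beta>)) * Q $$ (l, a))"
      unfolding \<Phi>_def using that Lsub unfolding C_def by (intro sum.cong refl) auto
    then show ?thesis unfolding \<Phi>_def by (simp add: algebra_simps sum_subtractf)
  qed
  have feq: "f Y = f X \<longleftrightarrow> (\<forall>c<\<beta> * K. \<Phi> Y (pc c) = \<Phi> X (pc c))" if "X \<in> C" "Y \<in> C" for X Y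
    using ans[OF that(1)] ans[OF that(2)] by (auto simp: vec_eq_iff)
  define Z0 where "Z0 = (0\<^sub>m (\<alpha> * m) k :: 'a mat)"
  have Z0C: "Z0 \<in> C" unfolding Z0_def C_def by simp
  have Phi0: "\<Phi> Z0 a = 0" for a unfolding \<Phi>_def Z0_def using Lsub by (auto intro!: sum.neutral)
  have fib: "card {Y\<in>C. f Y = f X} = card {Y\<in>C. f Y = f Z0}" if X: "X \<in> C" for X
  proof (rule antisym)
    have inj1: "inj_on (\<lambda>Y. Y - X) {Y\<in>C. f Y = f X}"
    proof (rule inj_onI)
      fix Y1 Y2 assume "Y1 \<in> {Y\<in>C. f Y = f X}" "Y2 \<in> {Y\<in>C. f Y = f X}" "Y1 - X = Y2 - X"
      then have Y: "Y1 \<in> carrier_mat (\<alpha> * m) k" "Y2 \<in> carrier_mat (\<alpha> * m) k" "Y1 - X = Y2 - X"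
        unfolding C_def by auto
      show "Y1 = Y2"
      proof (rule eq_matI)
        fix i j assume ij: "i < dim_row Y2" "j < dim_col Y2"
        have "(Y1 - X) $$ (i, j) = (Y2 - X) $$ (i, j)" using Y(3) by simp
        then show "Y1 $$ (i, j) = Y2 $$ (i, j)" using ij Y(1,2) X unfolding C_def by simp
      qed (use Y in auto)
    qed
    have map1: "(\<lambda>Y. Y - X) ` {Y\<in>C. f Y = f X} \<subseteq> {Y\<in>C. f Y = f Z0}"
    proof
      fix W assume "W \<in> (\<lambda>Y. Y - X) ` {Y\<in>C. f Y = f X}"
      then obtain Y where Y: "Y \<in> C" "f Y = f X" "W = Y - X" by blast
      have WC: "W \<in> C" using Y X unfolding C_def by (simp add: minus_carrier_mat)
      have "\<forall>c<\<beta> * K. \<Phi> W (pc c) = \<Phi> Z0 (pc c)"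
        using feq[OF X Y(1)] Y Phi_minus[OF X Y(1)] Phi0 by simp
      then show "W \<in> {Y\<in>C. f Y = f Z0}" using feq[OF Z0C WC] WC by simp
    qed
    show "card {Y\<in>C. f Y = f X} \<le> card {Y\<in>C. f Y = f Z0}"
      using card_inj_on_le[OF inj1 map1] fC by simp
    have inj2: "inj_on (\<lambda>Y. Y + X) {Y\<in>C. f Y = f Z0}"
    proof (rule inj_onI)
      fix Y1 Y2 assume "Y1 \<in> {Y\<in>C. f Y = f Z0}" "Y2 \<in> {Y\<in>C. f Y = f Z0}" "Y1 + X = Y2 + X"
      then have Y: "Y1 \<in> carrier_mat (\<alpha> * m) k" "Y2 \<in> carrier_mat (\<alpha> * m) k" "Y1 + X = Y2 + X"
        unfolding C_def by auto
      show "Y1 = Y2"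
      proof (rule eq_matI)
        fix i j assume ij: "i < dim_row Y2" "j < dim_col Y2"
        have "(Y1 + X) $$ (i, j) = (Y2 + X) $$ (i, j)" using Y(3) by simp
        then show "Y1 $$ (i, j) = Y2 $$ (i, j)" using ij Y(1,2) X unfolding C_def by simp
      qed (use Y in auto)
    qed
    have map2: "(\<lambda>Y. Y + X) ` {Y\<in>C. f Y = f Z0} \<subseteq> {Y\<in>C. f Y = f X}"
    proof
      fix W assume "W \<in> (\<lambda>Y. Y + X) ` {Y\<in>C. f Y = f Z0}"
      then obtain Y where Y: "Y \<in> C" "f Y = f Z0" "W = Y + X" by blast
      have WC: "W \<in> C" using Y X unfolding C_def by simp
      have "\<forall>c<\<beta> * K. \<Phi> W (pc c) = \<Phi> X (pc c)"
        using feq[OF Z0C Y(1)] Y Phi_add[OF X Y(1)] Phi0 by simp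
      then show "W \<in> {Y\<in>C. f Y = f X}" using feq[OF X WC] WC by simp
    qed
    show "card {Y\<in>C. f Y = f Z0} \<le> card {Y\<in>C. f Y = f X}"
      using card_inj_on_le[OF inj2 map2] fC by simp
  qed
  have q2: "2 \<le> card (UNIV :: 'a set)"
  proof -
    have "card {0::'a, 1} \<le> card (UNIV :: 'a set)" by (intro card_mono) auto
    then show ?thesis by simp
  qed
  have "entropy_unif (real (card (UNIV :: 'a set))) C f = log (real (card (UNIV :: 'a set))) (real (card (f ` C)))"
    by (rule entropy_const_fibers[OF fC _ _ fib]) (use Z0C q2 in auto)
  also have "\<dots> = real (card Z)" unfolding cimg using q2 by (simp add: log_nat_power)
  finally show ?thesis using cs unfolding C_def f_def L_def PN_def by simp
qed

end
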